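(* Let $P$ be a poset and $\varphi:\Delta^n\to N(P)$ a not-necessarily injective simplicial map. Then there exist an injective simplicial map $\bar\varphi:\Delta^k\to N(P)$ and a topological space $K$ such that $\|\Delta^\varphi\|_P$ is a retract (in $\mathrm{Top}_P$) of $\|\Delta^{\bar\varphi}\|_P\otimes K$.
   Context: $\mathrm{Top}_P$: $\Delta$-generated spaces $X$ with continuous $\varphi_X:X\to P$ ($P$ with the Alexandrov topology), maps commuting over $P$. $\varphi_P:\|N(P)\|\to P$ sends a point $(\{p_0<\dots<p_m\},t)$, $t$ in the interior of $\Delta^m$, to $p_m$. For a simplicial map $\psi:\Delta^m\to N(P)$, $\|\Delta^\psi\|_P=(\|\Delta^m\|,\varphi_P\circ\|\psi\|)$. For a space $K$, $(X,\varphi_X)\otimes K=(X\times K,\varphi_X\circ pr_X)$. *)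

theory Defs
  imports "HOL-Analysis.Analysis" "HOL-Homology.Homology"
begin

definition simplex_top :: "nat \<Rightarrow> (nat \<Rightarrow> real) topology" where
  "simplex_top n = subtopology (powertop_real UNIV) (standard_simplex n)"

definition delta_generated :: "'a topology \<Rightarrow> bool" where
  "delta_generated X \<longleftrightarrow>
     (\<forall>U. U \<subseteq> topspace X \<longrightarrow>
        (\<forall>m \<sigma>. continuous_map (simplex_top m) X \<sigma> \<longrightarrow>
            openin (simplex_top m) {x \<in> topspace (simplex_top m). \<sigma> x \<in> U})
        \<longrightarrow> openin X U)"

text \<open>A simplicial map Delta^n -> N(P) is the same as an n-simplex of N(P),
  i.e. a monotone sequence f 0 \<le> ... \<le> f n in P.\<close>
definition simplicial_to_nerve :: "nat \<Rightarrow> (nat \<Rightarrow> 'p::order) \<Rightarrow> bool" where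
  "simplicial_to_nerve n f \<longleftrightarrow> monotone_on {..n} (\<le>) (\<le>) f"

text \<open>The stratification phi_P o ||f|| of |Delta^n|: a point t lies in the interior
  of the nondegenerate simplex of N(P) spanned by {f i | t i > 0}; phi_P sends it to
  the maximal vertex of that chain.\<close>
definition delta_strat :: "nat \<Rightarrow> (nat \<Rightarrow> 'p::order) \<Rightarrow> (nat \<Rightarrow> real) \<Rightarrow> 'p" where
  "delta_strat n f t =
     (THE p. p \<in> f ` {i. i \<le> n \<and> 0 < t i} \<and> (\<forall>q \<in> f ` {i. i \<le> n \<and> 0 < t i}. q \<le> p))"

definition stratified_retract ::
  "'a topology \<Rightarrow> ('a \<Rightarrow> 'p) \<Rightarrow> 'b topology \<Rightarrow> ('b \<Rightarrow> 'p) \<Rightarrow> bool" where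
  "stratified_retract X phiX Y phiY \<longleftrightarrow>
     (\<exists>i r. continuous_map X Y i \<and> continuous_map Y X r \<and>
        (\<forall>x \<in> topspace X. phiY (i x) = phiX x) \<and>
        (\<forall>y \<in> topspace Y. phiX (r y) = phiY y) \<and>
        (\<forall>x \<in> topspace X. r (i x) = x))"

definition strat_tensor ::
  "'a topology \<Rightarrow> ('a \<Rightarrow> 'p) \<Rightarrow> 'k topology \<Rightarrow> ('a \<times> 'k) topology \<times> ('a \<times> 'k \<Rightarrow> 'p)" where
  "strat_tensor X phi K = (prod_topology X K, \<lambda>z. phi (fst z))"

end

theory Submission
  imports Defs
begin

lemma chain_factor:
  fixes f :: "nat \<Rightarrow> 'p::order"
  assumes "monotone_on {..n} (\<le>) (\<le>) f"
  shows "\<exists>(k::nat) g h. monotone_on {..k} (\<le>) (\<le>) g \<and> inj_on g {..k} \<and>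
     (\<forall>i\<le>n. h i \<le> k \<and> f i = g (h i)) \<and> (\<forall>j\<le>k. \<exists>i\<le>n. h i = j)"
  using assms
proof (induction n)
  case 0
  show ?case
  proof -
    have "monotone_on {..0::nat} (\<le>) (\<le>) f \<and> inj_on f {..0::nat} \<and>
     (\<forall>i\<le>0::nat. (0::nat) \<le> 0 \<and> f i = f 0) \<and> (\<forall>j\<le>0::nat. \<exists>i\<le>0::nat. (0::nat) = j)"
      by (auto simp: monotone_on_def)
    then show ?thesis apply - apply (rule exI[where x="0::nat"]) apply (rule exI[where x=f]) apply (rule exI[where x="\<lambda>_::nat. 0::nat"]) by simp
  qed
next
  case (Suc n)
  have mf: "monotone_on {..n} (\<le>) (\<le>) f"
    using Suc.prems by (rule monotone_on_subset) auto
  obtain k :: nat and g h where g: "monotone_on {..k} (\<le>) (\<le>) g" "inj_on g {..k}"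
    and h: "\<forall>i\<le>n. h i \<le> k \<and> f i = g (h i)" "\<forall>j\<le>k. \<exists>i\<le>n. h i = j"
    using Suc.IH[OF mf] by (elim exE conjE) (erule that; assumption)
  have fle: "f i \<le> f (Suc n)" if "i \<le> Suc n" for i
    using Suc.prems that unfolding monotone_on_def by auto
  show ?case
  proof (cases "f (Suc n) = f n")
    case True
    let ?h = "h(Suc n := h n)"
    have 1: "\<forall>i\<le>Suc n. ?h i \<le> k \<and> f i = g (?h i)"
    proof (intro allI impI)
      fix i assume "i \<le> Suc n"
      then consider "i \<le> n" | "i = Suc n" by linarith
      then show "?h i \<le> k \<and> f i = g (?h i)"
      proof cases
        case 1 then show ?thesis using h by simp
      next
        case 2 then show ?thesis using h True by simp
      qed
    qed
    have 2: "\<forall>j\<le>k. \<exists>i\<le>Suc n. ?h i = j"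
    proof (intro allI impI)
      fix j assume "j \<le> k"
      then obtain i where "i \<le> n" "h i = j" using h(2) by blast
      then show "\<exists>i\<le>Suc n. ?h i = j" by (intro exI[of _ i]) simp
    qed
    show ?thesis
      apply (rule exI[where x=k], rule exI[where x=g], rule exI[where x="?h"])
      using g 1 2 by blast
  next
    case False
    have lt: "g j < f (Suc n)" if jk: "j \<le> k" for j
    proof -
      obtain i where i: "i \<le> n" "h i = j" using h(2) jk by blast
      have gj: "g j = f i" using h i by auto
      have a: "f i \<le> f n" using mf i unfolding monotone_on_def by auto
      have b: "f n \<le> f (Suc n)" using fle by auto
      have c: "f n \<noteq> f (Suc n)" using False by simp
      have d: "f n < f (Suc n)" using b c by (simp only: less_le) simp
      have "f i < f (Suc n)" using a d by (rule order.strict_trans1)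
      then show ?thesis using gj by simp
    qed
    let ?g = "g(Suc k := f (Suc n))"
    let ?h = "h(Suc n := Suc k)"
    have m: "monotone_on {..Suc k} (\<le>) (\<le>) ?g"
      unfolding monotone_on_def
    proof (intro ballI impI)
      fix x y assume "x \<in> {..Suc k}" "y \<in> {..Suc k}" "x \<le> y"
      then consider "y \<le> k" | "y = Suc k" "x \<le> k" | "x = Suc k" "y = Suc k" by fastforce
      then show "?g x \<le> ?g y"
      proof cases
        case 1 then show ?thesis using g(1) \<open>x \<le> y\<close> unfolding monotone_on_def by simp
      next
        case 2 then show ?thesis using lt[of x] by simp
      qed simp
    qed
    have inj: "inj_on ?g {..Suc k}"
      unfolding inj_on_def
    proof (intro ballI impI)
      fix x y assume "x \<in> {..Suc k}" "y \<in> {..Suc k}" "?g x = ?g y"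
      then consider "x \<le> k" "y \<le> k" | "x = Suc k" "y \<le> k" | "x \<le> k" "y = Suc k" | "x = Suc k" "y = Suc k"
        by fastforce
      then show "x = y"
      proof cases
        case 1 then show ?thesis using g(2) \<open>?g x = ?g y\<close> unfolding inj_on_def by simp
      next
        case 2 then show ?thesis using lt[of y] \<open>?g x = ?g y\<close> by simp
      next
        case 3 then show ?thesis using lt[of x] \<open>?g x = ?g y\<close> by simp
      qed simp
    qed
    have 1: "\<forall>i\<le>Suc n. ?h i \<le> Suc k \<and> f i = ?g (?h i)"
    proof (intro allI impI)
      fix i assume "i \<le> Suc n"
      then consider "i \<le> n" | "i = Suc n" by linarith
      then show "?h i \<le> Suc k \<and> f i = ?g (?h i)"
      proof cases
        case 1
        then have "h i \<le> k" "f i = g (h i)" using h by auto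
        then show ?thesis using 1 by simp
      next
        case 2 then show ?thesis by simp
      qed
    qed
    have 2: "\<forall>j\<le>Suc k. \<exists>i\<le>Suc n. ?h i = j"
    proof (intro allI impI)
      fix j assume "j \<le> Suc k"
      then consider "j \<le> k" | "j = Suc k" by linarith
      then show "\<exists>i\<le>Suc n. ?h i = j"
      proof cases
        case 1
        then obtain i where "i \<le> n" "h i = j" using h(2) by blast
        then show ?thesis by (intro exI[of _ i]) simp
      next
        case 2 then show ?thesis by (intro exI[of _ "Suc n"]) simp
      qed
    qed
    show ?thesis
      apply (rule exI[where x="Suc k"], rule exI[where x="?g"], rule exI[where x="?h"])
      using m inj 1 2 by blast
  qed
qed

lemma topspace_simplex_top: "topspace (simplex_top n) = standard_simplex n"
  by (simp add: simplex_top_def)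

lemma cont_proj: "continuous_map (simplex_top n) euclideanreal (\<lambda>x. x i)"
  unfolding simplex_top_def
  by (rule continuous_map_from_subtopology)
     (use continuous_map_product_projection[of i UNIV "\<lambda>_. euclideanreal"] in simp)

lemma cont_snd_proj: "continuous_map (prod_topology X (simplex_top n)) euclideanreal (\<lambda>z. snd z i)"
  using continuous_map_compose[OF continuous_map_snd cont_proj, of X n i] by (simp add: o_def)

lemma cont_fst_proj: "continuous_map (prod_topology (simplex_top n) X) euclideanreal (\<lambda>z. fst z i)"
  using continuous_map_compose[OF continuous_map_fst cont_proj, of n X i] by (simp add: o_def)

lemma cont_into_simplex:
  assumes "\<And>i. continuous_map X euclideanreal (\<lambda>x. F x i)"
    and "\<And>x. x \<in> topspace X \<Longrightarrow> F x \<in> standard_simplex n"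
  shows "continuous_map X (simplex_top n) F"
  unfolding simplex_top_def
  using assms by (auto simp: continuous_map_in_subtopology continuous_map_componentwise_UNIV)

lemma delta_generated_simplex: "delta_generated (simplex_top n)"
  unfolding delta_generated_def
proof (intro allI impI)
  fix U assume U: "U \<subseteq> topspace (simplex_top n)"
    and H: "\<forall>m \<sigma>. continuous_map (simplex_top m) (simplex_top n) \<sigma> \<longrightarrow>
            openin (simplex_top m) {x \<in> topspace (simplex_top m). \<sigma> x \<in> U}"
  have "openin (simplex_top n) {x \<in> topspace (simplex_top n). id x \<in> U}"
    using H continuous_map_id by blast
  moreover have "{x \<in> topspace (simplex_top n). id x \<in> U} = U" using U by auto
  ultimately show "openin (simplex_top n) U" by simp
qed

lemma strat_eq:
  assumes "g ` {j. j \<le> k \<and> 0 < s j} = f ` {i. i \<le> n \<and> 0 < t i}"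
  shows "delta_strat k g s = delta_strat n f t"
  unfolding delta_strat_def assms ..


theorem lemma3p3:
  fixes f :: "nat \<Rightarrow> 'p::order" and n :: nat
  assumes "simplicial_to_nerve n f"
  shows "\<exists>k g (K :: (nat \<Rightarrow> real) topology).
           simplicial_to_nerve k g \<and> inj_on g {..k} \<and> delta_generated K \<and>
           stratified_retract (simplex_top n) (delta_strat n f)
             (fst (strat_tensor (simplex_top k) (delta_strat k g) K))
             (snd (strat_tensor (simplex_top k) (delta_strat k g) K))"
proof -
  obtain k :: nat and g h where g: "monotone_on {..k} (\<le>) (\<le>) g" "inj_on g {..k}"
    and h0: "\<forall>i\<le>n. h i \<le> k \<and> f i = g (h i)" and hs0: "\<forall>j\<le>k. \<exists>i\<le>n. h i = j"
    using chain_factor[of n f, OF assms[unfolded simplicial_to_nerve_def]]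
    by (elim exE conjE) (erule that; assumption)
  have h: "h i \<le> k \<and> f i = g (h i)" if "i \<le> n" for i using h0 that by simp
  have hs: "\<exists>i\<le>n. h i = j" if "j \<le> k" for j using hs0 that by simp
  define fib where "fib j = {i. i \<le> n \<and> h i = j}" for j
  have finfib: "finite (fib j)" for j unfolding fib_def by auto
  define pi :: "(nat \<Rightarrow> real) \<Rightarrow> nat \<Rightarrow> real" where "pi t = (\<lambda>j. \<Sum>i\<in>fib j. t i)" for t
  define q :: "(nat \<Rightarrow> real) \<Rightarrow> (nat \<Rightarrow> real) \<Rightarrow> nat \<Rightarrow> real"
    where "q s t = (\<lambda>i. min (t i) (s (h i)) + max 0 (s (h i) - pi t (h i)))" for s t
  define r :: "(nat \<Rightarrow> real) \<times> (nat \<Rightarrow> real) \<Rightarrow> nat \<Rightarrow> real"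
    where "r z = (\<lambda>i. if i \<le> n then q (fst z) (snd z) i / (\<Sum>l\<le>n. q (fst z) (snd z) l) else 0)" for z
  have std: "t \<in> standard_simplex m \<longleftrightarrow>
      (\<forall>i. 0 \<le> t i \<and> t i \<le> 1) \<and> (\<forall>i>m. t i = 0) \<and> (\<Sum>i\<le>m. t i) = 1" for t m
    by (simp add: standard_simplex_def)
  have fibsub: "fib j \<subseteq> {..n}" for j unfolding fib_def by auto
  have pi_nonneg: "0 \<le> pi t j" if "t \<in> standard_simplex n" for t j
    using that unfolding pi_def std by (auto intro: sum_nonneg)
  have pi_ge: "t i \<le> pi t (h i)" if "t \<in> standard_simplex n" "i \<le> n" for t i
    unfolding pi_def using that unfolding std
    by (intro member_le_sum) (auto simp: fib_def finfib)
  have pi_sum: "(\<Sum>j\<le>k. pi t j) = (\<Sum>i\<le>n. t i)" for t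
    unfolding pi_def fib_def
    using sum.group[of "{..n}" "{..k}" h t] h by (auto simp: atMost_def)
  have pi_std: "pi t \<in> standard_simplex k" if t: "t \<in> standard_simplex n" for t
  proof -
    have "pi t j \<le> 1" for j
    proof -
      have "pi t j \<le> (\<Sum>i\<le>n. t i)" unfolding pi_def
        using t fibsub unfolding std by (intro sum_mono2) auto
      then show ?thesis using t unfolding std by simp
    qed
    moreover have "pi t j = 0" if "j > k" for j
    proof -
      have "fib j = {}"
      proof -
        { fix i assume "i \<le> n" "h i = j"
          then have False using h[of i] that by simp }
        then show ?thesis unfolding fib_def by blast
      qed
      then show ?thesis unfolding pi_def by simp
    qed
    ultimately show ?thesis using pi_nonneg[OF t] pi_sum t unfolding std by auto
  qed
  have pi_supp: "g ` {j. j \<le> k \<and> 0 < pi t j} = f ` {i. i \<le> n \<and> 0 < t i}"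
    if t: "t \<in> standard_simplex n" for t
  proof
    show "g ` {j. j \<le> k \<and> 0 < pi t j} \<subseteq> f ` {i. i \<le> n \<and> 0 < t i}"
    proof
      fix y assume "y \<in> g ` {j. j \<le> k \<and> 0 < pi t j}"
      then obtain j where j: "j \<le> k" "0 < pi t j" "y = g j" by auto
      have "\<exists>i\<in>fib j. t i \<noteq> 0"
      proof (rule ccontr)
        assume "\<not> ?thesis"
        then have "pi t j = 0" unfolding pi_def by simp
        then show False using j by simp
      qed
      then obtain i where i: "i \<in> fib j" "t i \<noteq> 0" by blast
      then have "0 < t i" "i \<le> n" "h i = j" using t unfolding std fib_def
        by (auto simp: less_le)
      moreover have "y = f i" using h[OF \<open>i \<le> n\<close>] j \<open>h i = j\<close> by simp
      ultimately show "y \<in> f ` {i. i \<le> n \<and> 0 < t i}" by blast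
    qed
  next
    show "f ` {i. i \<le> n \<and> 0 < t i} \<subseteq> g ` {j. j \<le> k \<and> 0 < pi t j}"
    proof
      fix y assume "y \<in> f ` {i. i \<le> n \<and> 0 < t i}"
      then obtain i where i: "i \<le> n" "0 < t i" "y = f i" by auto
      have "0 < pi t (h i)" using pi_ge[OF t i(1)] i by simp
      moreover have "y = g (h i)" "h i \<le> k" using h[OF i(1)] i by simp_all
      ultimately show "y \<in> g ` {j. j \<le> k \<and> 0 < pi t j}" by blast
    qed
  qed
  have q_nonneg: "0 \<le> q s t i" if "s \<in> standard_simplex k" "t \<in> standard_simplex n" for s t i
    using that unfolding q_def std by auto
  have q_supp: "(\<Sum>l\<le>n. q s t l) > 0 \<and> g ` {j. j \<le> k \<and> 0 < s j} = f ` {i. i \<le> n \<and> 0 < q s t i}"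
    if s: "s \<in> standard_simplex k" and t: "t \<in> standard_simplex n" for s t
  proof -
    have A: "\<exists>i\<le>n. h i = j \<and> 0 < q s t i" if j: "j \<le> k" "0 < s j" for j
    proof (cases "pi t j < s j")
      case True
      obtain i where "i \<le> n" "h i = j" using hs j by blast
      moreover have "0 \<le> t i" "0 \<le> s j" using s t unfolding std by simp_all
      moreover have "0 < q s t i"
        using True calculation unfolding q_def by (auto simp: min_def max_def)
      ultimately show ?thesis by blast
    next
      case False
      have "\<exists>i\<in>fib j. t i \<noteq> 0"
      proof (rule ccontr)
        assume "\<not> ?thesis"
        then have "pi t j = 0" unfolding pi_def by simp
        then show False using j False by simp
      qed
      then obtain i where i: "i \<in> fib j" "t i \<noteq> 0" by blast
      then have "0 < t i" "i \<le> n" "h i = j" using t unfolding std fib_def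
        by (auto simp: less_le)
      moreover have "0 < q s t i"
        using calculation j unfolding q_def by (auto simp: max_def)
      ultimately show ?thesis by blast
    qed
    have B: "0 < s (h i)" if "i \<le> n" "0 < q s t i" for i
    proof (rule ccontr)
      assume "\<not> 0 < s (h i)"
      then have "s (h i) = 0" using s unfolding std by (meson not_less order_antisym)
      moreover have "0 \<le> t i" using t unfolding std by simp
      ultimately have "q s t i = 0" using pi_nonneg[OF t, of "h i"] unfolding q_def
        by (auto simp: min_def max_def)
      then show False using that by simp
    qed
    obtain j where j: "j \<le> k" "0 < s j"
    proof -
      have "\<exists>j\<le>k. s j \<noteq> 0"
      proof (rule ccontr)
        assume "\<not> ?thesis"
        then have "(\<Sum>j\<le>k. s j) = 0" by simp
        then show False using s unfolding std by simp
      qed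
      then show ?thesis using that s unfolding std by (auto simp: less_le)
    qed
    obtain i where i: "i \<le> n" "0 < q s t i" using A[OF j] by blast
    have pos: "(\<Sum>l\<le>n. q s t l) > 0"
    proof -
      have "q s t i \<le> (\<Sum>l\<le>n. q s t l)"
        using i q_nonneg[OF s t] by (intro member_le_sum) auto
      then show ?thesis using i by simp
    qed
    have "g ` {j. j \<le> k \<and> 0 < s j} = f ` {i. i \<le> n \<and> 0 < q s t i}"
    proof
      show "g ` {j. j \<le> k \<and> 0 < s j} \<subseteq> f ` {i. i \<le> n \<and> 0 < q s t i}"
      proof
        fix y assume "y \<in> g ` {j. j \<le> k \<and> 0 < s j}"
        then obtain j where "j \<le> k" "0 < s j" "y = g j" by auto
        then obtain i where "i \<le> n" "h i = j" "0 < q s t i" using A by blast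
        moreover have "y = f i" using h[OF \<open>i \<le> n\<close>] \<open>h i = j\<close> \<open>y = g j\<close> by simp
        ultimately show "y \<in> f ` {i. i \<le> n \<and> 0 < q s t i}" by blast
      qed
    next
      show "f ` {i. i \<le> n \<and> 0 < q s t i} \<subseteq> g ` {j. j \<le> k \<and> 0 < s j}"
      proof
        fix y assume "y \<in> f ` {i. i \<le> n \<and> 0 < q s t i}"
        then obtain i where "i \<le> n" "0 < q s t i" "y = f i" by auto
        moreover have "y = g (h i)" "h i \<le> k" using h[OF \<open>i \<le> n\<close>] \<open>y = f i\<close> by simp_all
        moreover have "0 < s (h i)" using B \<open>i \<le> n\<close> \<open>0 < q s t i\<close> by blast
        ultimately show "y \<in> g ` {j. j \<le> k \<and> 0 < s j}" by blast
      qed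
    qed
    with pos show ?thesis by blast
  qed
  have r_std: "r (s, t) \<in> standard_simplex n" and r_supp: "{i. i \<le> n \<and> 0 < r (s, t) i} = {i. i \<le> n \<and> 0 < q s t i}"
    if s: "s \<in> standard_simplex k" and t: "t \<in> standard_simplex n" for s t
  proof -
    let ?S = "\<Sum>l\<le>n. q s t l"
    have S: "?S > 0" using q_supp[OF s t] by blast
    have le: "q s t i \<le> ?S" if "i \<le> n" for i
      using that q_nonneg[OF s t] by (intro member_le_sum) auto
    have sum1: "(\<Sum>i\<le>n. r (s, t) i) = 1"
    proof -
      have "(\<Sum>i\<le>n. r (s, t) i) = (\<Sum>i\<le>n. q s t i / ?S)" unfolding r_def by simp
      also have "\<dots> = ?S / ?S" by (rule sum_divide_distrib[symmetric])
      finally show ?thesis using S by simp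
    qed
    show "r (s, t) \<in> standard_simplex n" unfolding std
      using S le q_nonneg[OF s t] sum1 by (auto simp: r_def)
    show "{i. i \<le> n \<and> 0 < r (s, t) i} = {i. i \<le> n \<and> 0 < q s t i}"
      using S by (auto simp: r_def zero_less_divide_iff)
  qed
  have r_pi: "r (pi t, t) = t" if t: "t \<in> standard_simplex n" for t
  proof -
    have qt: "q (pi t) t i = t i" if "i \<le> n" for i
      using pi_ge[OF t that] unfolding q_def by simp
    have "(\<Sum>l\<le>n. q (pi t) t l) = 1" using qt t unfolding std by simp
    then show ?thesis using qt t unfolding std r_def by (auto simp: fun_eq_iff)
  qed
  have cont_pi: "continuous_map (simplex_top n) (simplex_top k) pi"
  proof (rule cont_into_simplex)
    show "continuous_map (simplex_top n) euclideanreal (\<lambda>x. pi x j)" for j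
      unfolding pi_def by (intro continuous_map_sum finfib cont_proj)
    show "pi x \<in> standard_simplex k" if "x \<in> topspace (simplex_top n)" for x
      using pi_std that by (simp add: topspace_simplex_top)
  qed
  let ?Y = "prod_topology (simplex_top k) (simplex_top n)"
  have cont_q: "continuous_map ?Y euclideanreal (\<lambda>z. q (fst z) (snd z) i)" for i
    unfolding q_def pi_def
    by (intro continuous_map_add continuous_map_real_min continuous_map_real_max
        continuous_map_diff continuous_map_sum finfib cont_snd_proj cont_fst_proj
        continuous_map_canonical_const)
  have cont_r: "continuous_map ?Y (simplex_top n) r"
  proof (rule cont_into_simplex)
    show "continuous_map ?Y euclideanreal (\<lambda>x. r x i)" for i
    proof (cases "i \<le> n")
      case True
      have "continuous_map ?Y euclideanreal
              (\<lambda>z. q (fst z) (snd z) i / (\<Sum>l\<le>n. q (fst z) (snd z) l))"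
      proof (intro continuous_map_real_divide cont_q continuous_map_sum)
        show "(\<Sum>l\<le>n. q (fst z) (snd z) l) \<noteq> 0" if "z \<in> topspace ?Y" for z
        proof -
          from that have "fst z \<in> standard_simplex k" "snd z \<in> standard_simplex n"
            by (auto simp: topspace_simplex_top)
          from q_supp[OF this] show ?thesis by linarith
        qed
      qed auto
      then show ?thesis using True unfolding r_def by simp
    next
      case False
      then show ?thesis unfolding r_def by simp
    qed
    show "r x \<in> standard_simplex n" if "x \<in> topspace ?Y" for x
      using that r_std by (cases x) (auto simp: topspace_simplex_top)
  qed
  have "stratified_retract (simplex_top n) (delta_strat n f) ?Y (\<lambda>z. delta_strat k g (fst z))"
    unfolding stratified_retract_def
  proof (intro exI conjI ballI)
    show "continuous_map (simplex_top n) ?Y (\<lambda>t. (pi t, t))"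
      by (intro continuous_map_pairedI cont_pi continuous_map_id[unfolded id_def])
    show "continuous_map ?Y (simplex_top n) r" by (rule cont_r)
    show "delta_strat k g (fst (pi x, x)) = delta_strat n f x" if "x \<in> topspace (simplex_top n)" for x
      using strat_eq[OF pi_supp] that by (simp add: topspace_simplex_top)
    show "delta_strat n f (r y) = delta_strat k g (fst y)" if yY: "y \<in> topspace ?Y" for y
    proof -
      obtain s t where y: "y = (s, t)" "s \<in> standard_simplex k" "t \<in> standard_simplex n"
        using yY by (cases y) (auto simp: topspace_simplex_top)
      have "g ` {j. j \<le> k \<and> 0 < s j} = f ` {i. i \<le> n \<and> 0 < r (s, t) i}"
        using q_supp[OF y(2,3)] r_supp[OF y(2,3)] by simp
      then have "delta_strat k g s = delta_strat n f (r (s, t))" by (rule strat_eq)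
      then show ?thesis using y(1) by simp
    qed
    show "r (pi x, x) = x" if "x \<in> topspace (simplex_top n)" for x
      using that r_pi by (simp add: topspace_simplex_top)
  qed
  then have R: "stratified_retract (simplex_top n) (delta_strat n f)
             (fst (strat_tensor (simplex_top k) (delta_strat k g) (simplex_top n)))
             (snd (strat_tensor (simplex_top k) (delta_strat k g) (simplex_top n)))"
    unfolding strat_tensor_def by simp
  have G: "simplicial_to_nerve k g" using g(1) unfolding simplicial_to_nerve_def .
  show ?thesis
    apply (rule exI[where x=k], rule exI[where x=g], rule exI[where x="simplex_top n"])
    using G g(2) delta_generated_simplex[of n] R by (intro conjI)
qed

end
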